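(* Let $R$ be the binary code $RM(1,5)$ with generator matrix whose rows are $1^{32}$, $1^{16}0^{16}$, $(1^80^8)^2$, $(1^40^4)^4$, $(1^20^2)^8$, $(10)^{16}$ (coordinates numbered $1,\ldots,32$), and let $v\in\mathbb{F}_2^{32}$ have support $\{1,2,3,4,5,9,17,29\}$. Then $N_{32}=\langle R,v\rangle$ is a binary $[32,7]$ code that is doubly even, contains the all-ones vector, and whose dual has minimum weight at least $4$, but no Type~II $\mathbb{Z}_4$-code $C$ with $C^{(1)}=N_{32}$ is extremal.
   Context: A $\mathbb{Z}_4$-code of length $n$ is a $\mathbb{Z}_4$-submodule of $\mathbb{Z}_4^n$; it is self-dual if it equals its dual with respect to $x\cdot y=\sum x_iy_i \pmod 4$. The Euclidean weight of $x$ is $n_1(x)+4n_2(x)+n_3(x)$, $n_\alpha(x)$ being the number of coordinates equal to $\alpha$. A Type~II $\mathbb{Z}_4$-code is a self-dual code all of whose codewords have Euclidean weight divisible by $8$; it is extremal if its minimum Euclidean weight equals $8\lfloor n/24\rfloor+8$ (so $16$ for $n=32$). The residue code is $C^{(1)}=\{c\bmod 2: c\in C\}$. $\langle B,v\rangle$ denotes the binary code generated by $B$ and $v$. A binary code is doubly even if all codeword weights are divisible by $4$. *)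

theory Defs
  imports Main "HOL-Library.Numeral_Type"
begin

text \<open>Vectors of length n are functions on nat supported in the coordinates 1..n.
  Z4 is the type 4 (integers mod 4), F2 is the type 2 (integers mod 2).\<close>

definition vecs :: "nat \<Rightarrow> (nat \<Rightarrow> 'a::zero) set" where
  "vecs n = {x. \<forall>i. i \<notin> {1..n} \<longrightarrow> x i = 0}"

definition z4_code :: "nat \<Rightarrow> (nat \<Rightarrow> 4) set \<Rightarrow> bool" where
  "z4_code n C \<longleftrightarrow> C \<subseteq> vecs n \<and> (\<lambda>i. 0) \<in> C
     \<and> (\<forall>x\<in>C. \<forall>y\<in>C. (\<lambda>i. x i + y i) \<in> C)
     \<and> (\<forall>c x. x \<in> C \<longrightarrow> (\<lambda>i. c * x i) \<in> C)"

definition dotp :: "nat \<Rightarrow> (nat \<Rightarrow> 'a::comm_ring_1) \<Rightarrow> (nat \<Rightarrow> 'a) \<Rightarrow> 'a" where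
  "dotp n x y = (\<Sum>i=1..n. x i * y i)"

definition dual_code :: "nat \<Rightarrow> (nat \<Rightarrow> 'a::comm_ring_1) set \<Rightarrow> (nat \<Rightarrow> 'a) set" where
  "dual_code n C = {y \<in> vecs n. \<forall>x\<in>C. dotp n x y = 0}"

definition self_dual_z4 :: "nat \<Rightarrow> (nat \<Rightarrow> 4) set \<Rightarrow> bool" where
  "self_dual_z4 n C \<longleftrightarrow> z4_code n C \<and> C = dual_code n C"

definition n_count :: "nat \<Rightarrow> (nat \<Rightarrow> 4) \<Rightarrow> 4 \<Rightarrow> nat" where
  "n_count n x a = card {i \<in> {1..n}. x i = a}"

definition eucl_wt :: "nat \<Rightarrow> (nat \<Rightarrow> 4) \<Rightarrow> nat" where
  "eucl_wt n x = n_count n x 1 + 4 * n_count n x 2 + n_count n x 3"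

definition type_II :: "nat \<Rightarrow> (nat \<Rightarrow> 4) set \<Rightarrow> bool" where
  "type_II n C \<longleftrightarrow> self_dual_z4 n C \<and> (\<forall>x\<in>C. 8 dvd eucl_wt n x)"

definition min_eucl_wt :: "nat \<Rightarrow> (nat \<Rightarrow> 4) set \<Rightarrow> nat" where
  "min_eucl_wt n C = Min {eucl_wt n x | x. x \<in> C \<and> x \<noteq> (\<lambda>i. 0)}"

definition extremal_type_II :: "nat \<Rightarrow> (nat \<Rightarrow> 4) set \<Rightarrow> bool" where
  "extremal_type_II n C \<longleftrightarrow> type_II n C \<and> min_eucl_wt n C = 8 * (n div 24) + 8"

definition red2 :: "4 \<Rightarrow> 2" where
  "red2 z = (if z = 1 \<or> z = 3 then 1 else 0)"

definition residue_code :: "(nat \<Rightarrow> 4) set \<Rightarrow> (nat \<Rightarrow> 2) set" where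
  "residue_code C = {(\<lambda>i. red2 (x i)) | x. x \<in> C}"

definition bin_gen :: "(nat \<Rightarrow> 2) set \<Rightarrow> (nat \<Rightarrow> 2) set" where
  "bin_gen G = {(\<lambda>i. \<Sum>g\<in>T. g i) | T. T \<subseteq> G}"

definition ham_wt :: "nat \<Rightarrow> (nat \<Rightarrow> 2) \<Rightarrow> nat" where
  "ham_wt n x = card {i \<in> {1..n}. x i \<noteq> 0}"

definition doubly_even :: "nat \<Rightarrow> (nat \<Rightarrow> 2) set \<Rightarrow> bool" where
  "doubly_even n B \<longleftrightarrow> (\<forall>x\<in>B. 4 dvd ham_wt n x)"

definition ind32 :: "(nat \<Rightarrow> bool) \<Rightarrow> nat \<Rightarrow> 2" where
  "ind32 P i = (if i \<in> {1..32} \<and> P i then 1 else 0)"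

definition RM15_gens :: "(nat \<Rightarrow> 2) set" where
  "RM15_gens = {ind32 (\<lambda>i. True),
                ind32 (\<lambda>i. i \<le> 16),
                ind32 (\<lambda>i. even ((i - 1) div 8)),
                ind32 (\<lambda>i. even ((i - 1) div 4)),
                ind32 (\<lambda>i. even ((i - 1) div 2)),
                ind32 (\<lambda>i. even (i - 1))}"

definition RM15 :: "(nat \<Rightarrow> 2) set" where
  "RM15 = bin_gen RM15_gens"

definition v32 :: "nat \<Rightarrow> 2" where
  "v32 = ind32 (\<lambda>i. i \<in> {1,2,3,4,5,9,17,29})"

definition N32 :: "(nat \<Rightarrow> 2) set" where
  "N32 = bin_gen (RM15 \<union> {v32})"

end

theory Submission
  imports Defs
begin
lemma ex2: "(x::2) = 0 \<or> x = 1"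
proof (cases x)
  case (of_int z) hence "z = 0 \<or> z = 1" by simp arith
  thus ?thesis using of_int by auto
qed

lemma ex4: "(x::4) = 0 \<or> x = 1 \<or> x = 2 \<or> x = 3"
proof (cases x)
  case (of_int z) hence "z = 0 \<or> z = 1 \<or> z = 2 \<or> z = 3" by simp arith
  thus ?thesis using of_int by auto
qed

lemma add_self2[simp]: "(x::2) + x = 0"
  using ex2[of x] by auto

lemma of_nat_2_eq0: "(of_nat n :: 2) = 0 \<longleftrightarrow> even n"
  by (simp add: of_nat_eq_0_iff_char_dvd)

lemma of_nat_4_eq0: "(of_nat n :: 4) = 0 \<longleftrightarrow> 4 dvd n"
  by (simp add: of_nat_eq_0_iff_char_dvd)

lemma bin_gen_0: "(\<lambda>i. 0) \<in> bin_gen G"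
  unfolding bin_gen_def by (rule CollectI, rule exI[of _ "{}"]) simp

lemma bin_gen_mem: "g \<in> G \<Longrightarrow> g \<in> bin_gen G"
  unfolding bin_gen_def by (rule CollectI, rule exI[of _ "{g}"]) simp

lemma bin_gen_add:
  assumes "finite G" "x \<in> bin_gen G" "y \<in> bin_gen G"
  shows "(\<lambda>i. x i + y i) \<in> bin_gen G"
proof -
  obtain T1 where T1: "T1 \<subseteq> G" "x = (\<lambda>i. \<Sum>g\<in>T1. g i)" using assms(2) unfolding bin_gen_def by auto
  obtain T2 where T2: "T2 \<subseteq> G" "y = (\<lambda>i. \<Sum>g\<in>T2. g i)" using assms(3) unfolding bin_gen_def by auto
  have f1: "finite T1" "finite T2" using T1 T2 assms(1) finite_subset by auto
  have "(\<lambda>i. x i + y i) = (\<lambda>i. \<Sum>g\<in>(T1 - T2) \<union> (T2 - T1). g i)"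
  proof
    fix i
    have a: "(\<Sum>g\<in>T1. g i) = (\<Sum>g\<in>T1 - T2. g i) + (\<Sum>g\<in>T1 \<inter> T2. g i)"
      using f1 by (simp add: sum.Int_Diff[of T1 _ T2] add.commute)
    have b: "(\<Sum>g\<in>T2. g i) = (\<Sum>g\<in>T2 - T1. g i) + (\<Sum>g\<in>T1 \<inter> T2. g i)"
      using f1 by (simp add: sum.Int_Diff[of T2 _ T1] add.commute inf_commute)
    have c: "(\<Sum>g\<in>(T1 - T2) \<union> (T2 - T1). g i) = (\<Sum>g\<in>T1 - T2. g i) + (\<Sum>g\<in>T2 - T1. g i)"
      using f1 by (intro sum.union_disjoint) auto
    show "x i + y i = (\<Sum>g\<in>(T1 - T2) \<union> (T2 - T1). g i)"
    proof -
      have e: "\<And>p q r::2. (p + r) + (q + r) = p + q"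
      proof -
        fix p q r :: 2
        have "(p + r) + (q + r) = p + q + (r + r)" by (simp add: ac_simps)
        thus "(p + r) + (q + r) = p + q" by simp
      qed
      show ?thesis unfolding T1(2) T2(2) a b c e ..
    qed
  qed
  moreover have "(T1 - T2) \<union> (T2 - T1) \<subseteq> G" using T1 T2 by auto
  ultimately show ?thesis unfolding bin_gen_def by blast
qed

lemma bin_gen_least:
  assumes "(\<lambda>i. 0) \<in> A" "G \<subseteq> A" "\<And>x y. x \<in> A \<Longrightarrow> y \<in> A \<Longrightarrow> (\<lambda>i. x i + y i) \<in> A"
  shows "bin_gen G \<subseteq> A"
proof
  fix x assume "x \<in> bin_gen G"
  then obtain T where T: "T \<subseteq> G" "x = (\<lambda>i. \<Sum>g\<in>T. g i)" unfolding bin_gen_def by auto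
  show "x \<in> A"
  proof (cases "finite T")
    case False thus ?thesis using T assms(1) by simp
  next
    case True
    have "(\<lambda>i. \<Sum>g\<in>T. g i) \<in> A" using True T(1)
    proof (induction T rule: finite_induct)
      case empty thus ?case using assms(1) by simp
    next
      case (insert g F)
      have "(\<lambda>i. g i + (\<Sum>g\<in>F. g i)) \<in> A" using insert assms by auto
      thus ?case using insert by simp
    qed
    thus ?thesis using T by simp
  qed
qed

lemma finite_bin_gen: "finite G \<Longrightarrow> finite (bin_gen G)"
proof -
  assume "finite G"
  have "bin_gen G = (\<lambda>T i. \<Sum>g\<in>T. g i) ` Pow G" unfolding bin_gen_def by auto
  thus ?thesis using \<open>finite G\<close> by simp
qed

lemma bin_gen_mono: "G \<subseteq> H \<Longrightarrow> bin_gen G \<subseteq> bin_gen H"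
  unfolding bin_gen_def by blast

lemma bin_gen_empty: "bin_gen {} = {\<lambda>i. 0}"
  unfolding bin_gen_def by auto

lemma bin_gen_insert_eq:
  assumes "finite G"
  shows "bin_gen (insert g G) = bin_gen G \<union> (\<lambda>x i. g i + x i) ` bin_gen G"
proof
  show "bin_gen (insert g G) \<subseteq> bin_gen G \<union> (\<lambda>x i. g i + x i) ` bin_gen G"
  proof
    fix x assume "x \<in> bin_gen (insert g G)"
    then obtain T where T: "T \<subseteq> insert g G" "x = (\<lambda>i. \<Sum>g\<in>T. g i)" unfolding bin_gen_def by auto
    have fT: "finite T" using T(1) assms finite_subset by auto
    show "x \<in> bin_gen G \<union> (\<lambda>x i. g i + x i) ` bin_gen G"
    proof (cases "g \<in> T")
      case False
      hence "T \<subseteq> G" using T by auto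
      thus ?thesis using T unfolding bin_gen_def by auto
    next
      case True
      have "T - {g} \<subseteq> G" using T by auto
      hence m: "(\<lambda>i. \<Sum>g\<in>T - {g}. g i) \<in> bin_gen G" unfolding bin_gen_def by auto
      have "x = (\<lambda>i. g i + (\<Sum>g\<in>T - {g}. g i))" using T(2) True fT
        by (simp add: sum.remove)
      thus ?thesis using m by auto
    qed
  qed
next
  have fi: "finite (insert g G)" using assms by simp
  have "bin_gen G \<subseteq> bin_gen (insert g G)" by (rule bin_gen_mono) auto
  moreover have "(\<lambda>x i. g i + x i) ` bin_gen G \<subseteq> bin_gen (insert g G)"
  proof
    fix y assume "y \<in> (\<lambda>x i. g i + x i) ` bin_gen G"
    then obtain x where "x \<in> bin_gen G" "y = (\<lambda>i. g i + x i)" by auto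
    moreover have "g \<in> bin_gen (insert g G)" by (rule bin_gen_mem) simp
    ultimately show "y \<in> bin_gen (insert g G)" using bin_gen_add[OF fi] \<open>bin_gen G \<subseteq> _\<close> by auto
  qed
  ultimately show "bin_gen G \<union> (\<lambda>x i. g i + x i) ` bin_gen G \<subseteq> bin_gen (insert g G)" by blast
qed

lemma bin_gen_card_insert:
  assumes "finite G" "g \<notin> bin_gen G"
  shows "card (bin_gen (insert g G)) = 2 * card (bin_gen G)"
proof -
  have fin: "finite (bin_gen G)" using assms(1) by (rule finite_bin_gen)
  have inj: "inj_on (\<lambda>x i. g i + x i) (bin_gen G)"
  proof (rule inj_onI)
    fix x y assume "(\<lambda>i. g i + x i) = (\<lambda>i. g i + y i)"
    thus "x = y" by (auto simp: fun_eq_iff)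
  qed
  have disj: "bin_gen G \<inter> (\<lambda>x i. g i + x i) ` bin_gen G = {}"
  proof (rule ccontr)
    assume "bin_gen G \<inter> (\<lambda>x i. g i + x i) ` bin_gen G \<noteq> {}"
    then obtain x y where xy: "x \<in> bin_gen G" "y \<in> bin_gen G" "y = (\<lambda>i. g i + x i)" by auto
    have "(\<lambda>i. y i + x i) \<in> bin_gen G" using bin_gen_add[OF assms(1) xy(2) xy(1)] .
    moreover have "(\<lambda>i. y i + x i) = g" using xy(3)
      by (auto simp: fun_eq_iff add.assoc)
    ultimately show False using assms(2) by simp
  qed
  have "card (bin_gen (insert g G)) = card (bin_gen G) + card ((\<lambda>x i. g i + x i) ` bin_gen G)"
    unfolding bin_gen_insert_eq[OF assms(1)] using fin disj by (intro card_Un_disjoint) auto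
  also have "\<dots> = 2 * card (bin_gen G)" using card_image[OF inj] by simp
  finally show ?thesis .
qed

lemma bin_gen_idem_insert:
  assumes "finite G0"
  shows "bin_gen (bin_gen G0 \<union> {v}) = bin_gen (insert v G0)"
proof
  have fi: "finite (insert v G0)" using assms by simp
  show "bin_gen (bin_gen G0 \<union> {v}) \<subseteq> bin_gen (insert v G0)"
  proof (rule bin_gen_least)
    show "(\<lambda>i. 0) \<in> bin_gen (insert v G0)" by (rule bin_gen_0)
    show "bin_gen G0 \<union> {v} \<subseteq> bin_gen (insert v G0)"
      using bin_gen_mono[of G0 "insert v G0"] bin_gen_mem[of v "insert v G0"] by auto
  qed (rule bin_gen_add[OF fi])
next
  have fi: "finite (bin_gen G0 \<union> {v})" using finite_bin_gen[OF assms] by simp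
  show "bin_gen (insert v G0) \<subseteq> bin_gen (bin_gen G0 \<union> {v})"
  proof (rule bin_gen_least)
    show "(\<lambda>i. 0) \<in> bin_gen (bin_gen G0 \<union> {v})" by (rule bin_gen_0)
    have "insert v G0 \<subseteq> bin_gen G0 \<union> {v}" using bin_gen_mem[of _ G0] by auto
    thus "insert v G0 \<subseteq> bin_gen (bin_gen G0 \<union> {v})" using bin_gen_mem by blast
  qed (rule bin_gen_add[OF fi])
qed

lemma dot_sum: "dotp n (\<lambda>i. \<Sum>g\<in>T. g i) w = (\<Sum>g\<in>T. dotp n g w)"
  unfolding dotp_def by (simp add: sum_distrib_right sum.swap[of _ T])

lemma orth_bin_gen:
  assumes "\<forall>g\<in>G. dotp n g w = 0" "x \<in> bin_gen G"
  shows "dotp n x w = 0"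
proof -
  obtain T where T: "T \<subseteq> G" "x = (\<lambda>i. \<Sum>g\<in>T. g i)" using assms(2) unfolding bin_gen_def by auto
  show ?thesis unfolding T(2) dot_sum using T(1) assms(1) by (auto intro!: sum.neutral)
qed

lemma dotp_comm: "dotp n x y = dotp n y x"
  unfolding dotp_def by (simp add: mult.commute)

definition supp :: "nat \<Rightarrow> (nat \<Rightarrow> 2) \<Rightarrow> nat set" where
  "supp n x = {i \<in> {1..n}. x i \<noteq> 0}"

lemma ham_wt_supp: "ham_wt n x = card (supp n x)"
  unfolding ham_wt_def supp_def ..

lemma dot2_card: "dotp n x y = of_nat (card (supp n x \<inter> supp n y))"
proof -
  have "dotp n x y = (\<Sum>i\<in>{1..n}. if i \<in> supp n x \<inter> supp n y then 1 else 0)"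
    unfolding dotp_def
  proof (rule sum.cong[OF refl])
    fix i show "x i * y i = (if i \<in> supp n x \<inter> supp n y then 1 else 0)" if "i \<in> {1..n}"
      using that ex2[of "x i"] ex2[of "y i"] unfolding supp_def by auto
  qed
  also have "\<dots> = of_nat (card ({1..n} \<inter> (supp n x \<inter> supp n y)))"
    by (simp add: sum.If_cases Int_def)
  also have "{1..n} \<inter> (supp n x \<inter> supp n y) = supp n x \<inter> supp n y" unfolding supp_def by auto
  finally show ?thesis .
qed

lemma wt_add: "ham_wt n (\<lambda>i. x i + y i) + 2 * card (supp n x \<inter> supp n y) = ham_wt n x + ham_wt n y"
proof -
  let ?A = "supp n x" and ?B = "supp n y"
  have fA: "finite ?A" "finite ?B" unfolding supp_def by auto
  have s: "supp n (\<lambda>i. x i + y i) = (?A \<union> ?B) - (?A \<inter> ?B)"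
  proof -
    have "x i + y i \<noteq> 0 \<longleftrightarrow> (x i \<noteq> 0 \<and> y i = 0) \<or> (x i = 0 \<and> y i \<noteq> 0)" for i
      using ex2[of "x i"] ex2[of "y i"] by auto
    thus ?thesis unfolding supp_def by auto
  qed
  have c1: "card ((?A \<union> ?B) - (?A \<inter> ?B)) = card (?A \<union> ?B) - card (?A \<inter> ?B)"
    using fA by (intro card_Diff_subset) auto
  have c2: "card (?A \<inter> ?B) \<le> card (?A \<union> ?B)" using fA by (intro card_mono) auto
  have "card ((?A \<union> ?B) - (?A \<inter> ?B)) + card (?A \<inter> ?B) = card (?A \<union> ?B)"
    using c1 c2 by simp
  moreover have "card (?A \<union> ?B) + card (?A \<inter> ?B) = card ?A + card ?B"
    using fA card_Un_Int by metis
  ultimately show ?thesis unfolding ham_wt_supp s by linarith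
qed

lemma arith4: "(e::nat) + 2*c = a + b \<Longrightarrow> 4 dvd a \<Longrightarrow> 4 dvd b \<Longrightarrow> even c \<Longrightarrow> 4 dvd e"
  by presburger

lemma doubly_even_gen:
  assumes fin: "finite G"
    and wt: "\<forall>g\<in>G. 4 dvd ham_wt n g"
    and orth: "\<forall>g\<in>G. \<forall>h\<in>G. dotp n g h = 0"
  shows "\<forall>x\<in>bin_gen G. 4 dvd ham_wt n x"
proof -
  have so: "dotp n x y = 0" if "x \<in> bin_gen G" "y \<in> bin_gen G" for x y
  proof -
    have "\<forall>g\<in>G. dotp n g y = 0"
    proof
      fix g assume "g \<in> G"
      have "dotp n y g = 0" using orth_bin_gen[of G n g y] \<open>g \<in> G\<close> orth that(2) by metis
      thus "dotp n g y = 0" using dotp_comm by metis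
    qed
    thus ?thesis using orth_bin_gen that(1) by blast
  qed
  have "bin_gen G \<subseteq> {x \<in> bin_gen G. 4 dvd ham_wt n x}"
  proof (rule bin_gen_least)
    show "(\<lambda>i. 0) \<in> {x \<in> bin_gen G. 4 dvd ham_wt n x}"
      using bin_gen_0 by (simp add: ham_wt_def)
    show "G \<subseteq> {x \<in> bin_gen G. 4 dvd ham_wt n x}" using wt bin_gen_mem by auto
  next
    fix x y assume x: "x \<in> {x \<in> bin_gen G. 4 dvd ham_wt n x}" and y: "y \<in> {x \<in> bin_gen G. 4 dvd ham_wt n x}"
    have "of_nat (card (supp n x \<inter> supp n y)) = (0::2)" using so x y dot2_card by auto
    hence e: "even (card (supp n x \<inter> supp n y))" using of_nat_2_eq0 by blast
    have "4 dvd ham_wt n (\<lambda>i. x i + y i)" using arith4[OF wt_add[of n x y]] e x y by auto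
    thus "(\<lambda>i. x i + y i) \<in> {x \<in> bin_gen G. 4 dvd ham_wt n x}" using bin_gen_add[OF fin] x y by auto
  qed
  thus ?thesis by auto
qed

lemma ind32_vecs: "ind32 P \<in> vecs 32"
  unfolding vecs_def ind32_def by auto

lemma card_filter_upt: "card {i \<in> {1..n}. P i} = length (filter P [1..<Suc n])"
proof -
  have eq: "{i \<in> {1..n}. P i} = set (filter P [1..<Suc n])" unfolding set_filter set_upt by auto
  have d: "card (set (filter P [1..<Suc n])) = length (filter P [1..<Suc n])"
    by (rule distinct_card) (simp del: upt_Suc)
  show ?thesis by (simp only: eq d)
qed

lemma supp_ind32: "supp 32 (ind32 P) = {i \<in> {1..32}. P i}"
  unfolding supp_def ind32_def by auto

lemma dot_ind32: "dotp 32 (ind32 P) (ind32 Q) = of_nat (length (filter (\<lambda>i. P i \<and> Q i) [1..<33]))"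
proof -
  have "supp 32 (ind32 P) \<inter> supp 32 (ind32 Q) = {i \<in> {1..32}. P i \<and> Q i}"
    unfolding supp_ind32 by auto
  thus ?thesis unfolding dot2_card using card_filter_upt[of 32] by simp
qed

lemma wt_ind32: "ham_wt 32 (ind32 P) = length (filter P [1..<33])"
  unfolding ham_wt_supp supp_ind32 using card_filter_upt[of 32] by simp

lemma "dotp 32 (ind32 (\<lambda>i. even ((i - 1) div 8))) (ind32 (\<lambda>i. i \<in> {1,2,5,6})) = 0"
  unfolding dot_ind32 by (simp add: upt_rec)

definition "g0 = ind32 (\<lambda>i. True)"
definition "g1 = ind32 (\<lambda>i. i \<le> 16)"
definition "g2 = ind32 (\<lambda>i. even ((i - 1) div 8))"
definition "g3 = ind32 (\<lambda>i. even ((i - 1) div 4))"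
definition "g4 = ind32 (\<lambda>i. even ((i - 1) div 2))"
definition "g5 = ind32 (\<lambda>i. even (i - 1))"

lemma RM15_gens_eq: "RM15_gens = {g0, g1, g2, g3, g4, g5}"
  unfolding RM15_gens_def g0_def g1_def g2_def g3_def g4_def g5_def ..

definition "Gall = insert v32 {g0, g1, g2, g3, g4, g5}"

lemma N32_eq: "N32 = bin_gen Gall"
  unfolding N32_def RM15_def Gall_def RM15_gens_eq
  by (rule bin_gen_idem_insert) simp

lemmas cdefs = g0_def g1_def g2_def g3_def g4_def g5_def v32_def dot_ind32 wt_ind32

lemma card_step:
  assumes "finite G" "\<forall>g\<in>G. dotp 32 g y = 0" "dotp 32 h y \<noteq> 0"
  shows "card (bin_gen (insert h G)) = 2 * card (bin_gen G)"
proof -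
  have "h \<notin> bin_gen G" using orth_bin_gen[OF assms(2)] assms(3) by blast
  thus ?thesis by (rule bin_gen_card_insert[OF assms(1)])
qed

lemma card_N32: "card N32 = 2 ^ 7"
proof -
  have c5: "card (bin_gen {g5}) = 2"
    using card_step[of "{}" "ind32 (\<lambda>i. i \<in> {1})" g5] by (simp add: cdefs upt_rec bin_gen_empty)
  have c4: "card (bin_gen {g4, g5}) = 4"
    using card_step[of "{g5}" "ind32 (\<lambda>i. i \<in> {2})" g4] c5 by (simp add: cdefs upt_rec)
  have c3: "card (bin_gen {g3, g4, g5}) = 8"
    using card_step[of "{g4, g5}" "ind32 (\<lambda>i. i \<in> {4})" g3] c4 by (simp add: cdefs upt_rec)
  have c2: "card (bin_gen {g2, g3, g4, g5}) = 16"
    using card_step[of "{g3, g4, g5}" "ind32 (\<lambda>i. i \<in> {8})" g2] c3 by (simp add: cdefs upt_rec)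
  have c1: "card (bin_gen {g1, g2, g3, g4, g5}) = 32"
    using card_step[of "{g2, g3, g4, g5}" "ind32 (\<lambda>i. i \<in> {16})" g1] c2 by (simp add: cdefs upt_rec)
  have c0: "card (bin_gen {g0, g1, g2, g3, g4, g5}) = 64"
    using card_step[of "{g1, g2, g3, g4, g5}" "ind32 (\<lambda>i. i \<in> {32})" g0] c1 by (simp add: cdefs upt_rec)
  have cv: "card (bin_gen Gall) = 128" unfolding Gall_def
    using card_step[of "{g0, g1, g2, g3, g4, g5}" "ind32 (\<lambda>i. i \<in> {1,2,5,6})" v32] c0 by (simp add: cdefs upt_rec)
  thus ?thesis unfolding N32_eq by simp
qed

lemma N32_de: "doubly_even 32 N32"
  unfolding doubly_even_def N32_eq
proof (rule doubly_even_gen)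
  show "finite Gall" unfolding Gall_def by simp
  show "\<forall>g\<in>Gall. 4 dvd ham_wt 32 g" unfolding Gall_def by (simp add: cdefs upt_rec; presburger)
  show "\<forall>g\<in>Gall. \<forall>h\<in>Gall. dotp 32 g h = 0" unfolding Gall_def by (simp add: cdefs upt_rec)
qed

lemma N32_vecs: "N32 \<subseteq> vecs 32"
  unfolding N32_eq
proof (rule bin_gen_least)
  show "(\<lambda>i. 0) \<in> vecs 32" unfolding vecs_def by simp
  show "Gall \<subseteq> vecs 32" unfolding Gall_def cdefs using ind32_vecs by auto
  show "\<And>x y :: nat \<Rightarrow> 2. x \<in> vecs 32 \<Longrightarrow> y \<in> vecs 32 \<Longrightarrow> (\<lambda>i. x i + y i) \<in> vecs 32"
    unfolding vecs_def by auto
qed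

lemma ones_N32: "ind32 (\<lambda>i. True) \<in> N32"
  unfolding N32_eq Gall_def g0_def[symmetric] by (rule bin_gen_mem) simp

lemma key_bits: "i \<in> {1..32::nat} \<Longrightarrow> i = 1 + (if i \<le> 16 then 0 else 16) + (if even ((i - 1) div 8) then 0 else 8)
   + (if even ((i - 1) div 4) then 0 else 4) + (if even ((i - 1) div 2) then 0 else 2) + (if even (i - 1) then 0 else 1)"
proof -
  have "\<forall>i \<in> set [1..<33]. i = 1 + (if i \<le> 16 then 0 else 16) + (if even ((i - 1) div 8) then 0 else 8)
   + (if even ((i - 1) div 4) then 0 else 4) + (if even ((i - 1) div 2) then 0 else 2) + (if even (i - 1) then (0::nat) else 1)"
    by (simp add: upt_rec)
  moreover assume "i \<in> {1..32}"
  hence "i \<in> set [1..<33]" by (simp only: set_upt) auto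
  ultimately show ?thesis by (rule bspec)
qed

lemma pair_even:
  assumes "i \<noteq> j" "i \<in> {1..32::nat}" "j \<in> {1..32}" "even (card ({t \<in> {1..32}. P t} \<inter> {i, j}))"
  shows "P i = P j"
proof (rule ccontr)
  assume "P i \<noteq> P j"
  show False
  proof (cases "P i")
    case True
    hence "{t \<in> {1..32}. P t} \<inter> {i, j} = {i}" using \<open>P i \<noteq> P j\<close> assms(2) by blast
    thus False using assms(4) by simp
  next
    case False
    hence "{t \<in> {1..32}. P t} \<inter> {i, j} = {j}" using \<open>P i \<noteq> P j\<close> assms(3) by blast
    thus False using assms(4) by simp
  qed
qed

lemma ev4: "even (k::nat) \<Longrightarrow> k \<noteq> 0 \<Longrightarrow> k \<noteq> 2 \<Longrightarrow> 4 \<le> k"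
  by presburger

lemma dual_wt:
  assumes y: "y \<in> dual_code 32 N32" and nz: "y \<noteq> (\<lambda>i. 0)"
  shows "ham_wt 32 y \<ge> 4"
proof -
  have yv: "y \<in> vecs 32" and orth: "\<forall>x\<in>N32. dotp 32 x y = 0" using y unfolding dual_code_def by auto
  have ev_of: "even (card ({t \<in> {1..32}. P t} \<inter> supp 32 y))" if "ind32 P \<in> N32" for P
  proof -
    have "dotp 32 (ind32 P) y = 0" using orth that by auto
    hence "of_nat (card ({t \<in> {1..32}. P t} \<inter> supp 32 y)) = (0::2)" unfolding dot2_card supp_ind32 .
    thus ?thesis using of_nat_2_eq0 by blast
  qed
  have gN: "g \<in> N32" if "g \<in> Gall" for g unfolding N32_eq using bin_gen_mem that .
  have sub: "supp 32 y \<subseteq> {1..32}" unfolding supp_def by auto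
  have g0N: "g0 \<in> N32" using gN unfolding Gall_def by simp
  have "even (card ({t \<in> {1..32}. True} \<inter> supp 32 y))" using ev_of[OF g0N[unfolded g0_def]] .
  moreover have "{t \<in> {1..32}. True} \<inter> supp 32 y = supp 32 y" using sub by auto
  ultimately have ev: "even (ham_wt 32 y)" unfolding ham_wt_supp by simp
  have n0: "ham_wt 32 y \<noteq> 0"
  proof
    assume "ham_wt 32 y = 0"
    hence "supp 32 y = {}" unfolding ham_wt_supp supp_def by simp
    hence "y = (\<lambda>i. 0)" using yv unfolding supp_def vecs_def by (auto simp: fun_eq_iff)
    thus False using nz by simp
  qed
  have n2: "ham_wt 32 y \<noteq> 2"
  proof
    assume "ham_wt 32 y = 2"
    hence "card (supp 32 y) = 2" unfolding ham_wt_supp .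
    then obtain i j where ij0: "supp 32 y = {i, j}" "i \<noteq> j" unfolding card_2_iff by blast
    hence ij: "i \<noteq> j" "supp 32 y = {i, j}" by auto
    have ij32: "i \<in> {1..32}" "j \<in> {1..32}" using ij sub by auto
    have P: "P i = P j" if "ind32 P \<in> N32" for P
      using ev_of[OF that] unfolding ij(2) by (rule pair_even[OF ij(1) ij32])
    have gs: "g1 \<in> N32" "g2 \<in> N32" "g3 \<in> N32" "g4 \<in> N32" "g5 \<in> N32"
      by (rule gN, simp add: Gall_def)+
    have e1: "(i \<le> 16) = (j \<le> 16)" using P[OF gs(1)[unfolded g1_def]] .
    have e2: "even ((i - 1) div 8) = even ((j - 1) div 8)" using P[OF gs(2)[unfolded g2_def]] .
    have e3: "even ((i - 1) div 4) = even ((j - 1) div 4)" using P[OF gs(3)[unfolded g3_def]] .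
    have e4: "even ((i - 1) div 2) = even ((j - 1) div 2)" using P[OF gs(4)[unfolded g4_def]] .
    have e5: "even (i - 1) = even (j - 1)" using P[OF gs(5)[unfolded g5_def]] .
    have "i = j"
      apply (subst key_bits[OF ij32(1)])
      apply (subst key_bits[OF ij32(2)])
      by (simp only: e1 e2 e3 e4 e5)
    thus False using ij(1) by simp
  qed
  show ?thesis using ev n0 n2 ev4 by blast
qed

definition tw :: "(nat \<Rightarrow> 2) \<Rightarrow> nat \<Rightarrow> 4" where
  "tw w i = (if w i = 1 then 2 else 0)"

lemma red2_vals: "red2 0 = 0" "red2 1 = 1" "red2 2 = 0" "red2 3 = 1"
  unfolding red2_def by simp_all

lemma z4_dot_tw: "dotp n x (tw w) = of_nat (card (supp n (\<lambda>i. red2 (x i)) \<inter> supp n w)) * 2"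
proof -
  let ?K = "supp n (\<lambda>i. red2 (x i)) \<inter> supp n w"
  have "dotp n x (tw w) = (\<Sum>i\<in>{1..n}. if i \<in> ?K then 2 else 0)"
    unfolding dotp_def
  proof (rule sum.cong[OF refl])
    fix i assume i: "i \<in> {1..n}"
    show "x i * tw w i = (if i \<in> ?K then 2 else 0)"
      using ex4[of "x i"] ex2[of "w i"] i unfolding supp_def tw_def by (auto simp: red2_vals)
  qed
  also have "\<dots> = of_nat (card ({1..n} \<inter> ?K)) * 2"
    by (simp add: sum.If_cases Int_def)
  also have "{1..n} \<inter> ?K = ?K" unfolding supp_def by auto
  finally show ?thesis .
qed

lemma tw_in_C:
  assumes sd: "self_dual_z4 32 C" and res: "\<forall>x\<in>C. (\<lambda>i. red2 (x i)) \<in> N32"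
    and wv: "w \<in> vecs 32" and wo: "\<forall>u\<in>N32. dotp 32 u w = 0"
  shows "tw w \<in> C"
proof -
  have "tw w \<in> dual_code 32 C"
    unfolding dual_code_def
  proof (intro CollectI conjI ballI)
    show "tw w \<in> vecs 32" using wv unfolding vecs_def tw_def by auto
    fix x assume "x \<in> C"
    hence "dotp 32 (\<lambda>i. red2 (x i)) w = 0" using res wo by blast
    hence "even (card (supp 32 (\<lambda>i. red2 (x i)) \<inter> supp 32 w))"
      unfolding dot2_card of_nat_2_eq0 .
    then obtain m where m: "card (supp 32 (\<lambda>i. red2 (x i)) \<inter> supp 32 w) = 2 * m" by (auto elim: evenE)
    have "(of_nat (2 * m) :: 4) * 2 = of_nat (4 * m)" by simp
    also have "\<dots> = 0" unfolding of_nat_4_eq0 by simp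
    finally show "dotp 32 x (tw w) = 0" unfolding z4_dot_tw m .
  qed
  thus ?thesis using sd unfolding self_dual_z4_def by simp
qed

definition c0list :: "nat list" where
  "c0list = [7,8,10,11,12,13,14,15,16,18,19,20,21,22,23,24,25,26,27,28,30,31,32]"

definition wtab :: "(nat \<times> nat list) list" where
  "wtab = [(7, [1, 4, 6, 7]), (8, [1, 3, 6, 8]), (10, [5, 6, 9, 10]), (11, [1, 4, 5, 6, 9, 11]),
   (12, [1, 3, 5, 6, 9, 12]), (13, [2, 6, 9, 13]), (14, [1, 6, 9, 14]), (15, [4, 6, 9, 15]),
   (16, [3, 6, 9, 16]), (18, [5, 6, 17, 18]), (19, [1, 4, 5, 6, 17, 19]), (20, [1, 3, 5, 6, 17, 20]),
   (21, [2, 6, 17, 21]), (22, [1, 6, 17, 22]), (23, [4, 6, 17, 23]), (24, [3, 6, 17, 24]),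
   (25, [2, 6, 25, 29]), (26, [1, 6, 26, 29]), (27, [4, 6, 27, 29]), (28, [3, 6, 28, 29]),
   (30, [5, 6, 29, 30]), (31, [1, 4, 5, 6, 29, 31]), (32, [1, 3, 5, 6, 29, 32])]"

lemma wtab_fst: "map fst wtab = c0list"
  unfolding wtab_def c0list_def by simp

lemma wtab_ok: "list_all (\<lambda>(j,S). (\<forall>g\<in>Gall. dotp 32 g (ind32 (\<lambda>i. i \<in> set S)) = 0) \<and> j \<in> set S
    \<and> list_all (\<lambda>k. k = j \<or> k \<notin> set S) c0list) wtab"
  unfolding wtab_def c0list_def Gall_def by (simp add: cdefs upt_rec)

lemma wcert:
  assumes j: "j \<in> set c0list"
  shows "\<exists>w. w \<in> vecs 32 \<and> (\<forall>u\<in>N32. dotp 32 u w = 0) \<and> w j = 1 \<and> (\<forall>k\<in>set c0list. k \<noteq> j \<longrightarrow> w k = 0)"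
proof -
  obtain S where S: "(j, S) \<in> set wtab" using j unfolding wtab_fst[symmetric] by auto
  have ok: "(\<forall>g\<in>Gall. dotp 32 g (ind32 (\<lambda>i. i \<in> set S)) = 0) \<and> j \<in> set S
    \<and> list_all (\<lambda>k. k = j \<or> k \<notin> set S) c0list"
    using wtab_ok S unfolding list_all_iff by fastforce
  have j32: "j \<in> {1..32}" using j unfolding c0list_def by auto
  let ?w = "ind32 (\<lambda>i. i \<in> set S)"
  have "\<forall>u\<in>N32. dotp 32 u ?w = 0" unfolding N32_eq using orth_bin_gen ok by blast
  moreover have "?w j = 1" using ok j32 unfolding ind32_def by auto
  moreover have "\<forall>k\<in>set c0list. k \<noteq> j \<longrightarrow> ?w k = 0" using ok unfolding ind32_def list_all_iff by auto
  ultimately show ?thesis using ind32_vecs by blast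
qed

lemma c0_v32: "\<forall>j\<in>set c0list. v32 j = 0"
  unfolding c0list_def v32_def ind32_def by simp

lemma c0_cover: "\<forall>i\<in>set [1..<33]. i \<in> set c0list \<or> i = 6 \<or> v32 i = 1"
  unfolding c0list_def v32_def ind32_def by (simp add: upt_rec)

lemma v32_wt: "ham_wt 32 v32 = 8"
  unfolding v32_def wt_ind32 by (simp add: upt_rec)

lemma red2_add_tw: "red2 (a + tw w i) = red2 a"
  using ex4[of a] unfolding tw_def red2_def by auto

lemma reduce:
  assumes z4: "z4_code 32 C" and sd: "self_dual_z4 32 C" and res: "\<forall>x\<in>C. (\<lambda>i. red2 (x i)) \<in> N32"
  shows "y \<in> C \<Longrightarrow> (\<forall>i. red2 (y i) = v32 i) \<Longrightarrow> card {j \<in> set c0list. y j \<noteq> 0} = n \<Longrightarrow>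
    \<exists>y'. y' \<in> C \<and> (\<forall>i. red2 (y' i) = v32 i) \<and> (\<forall>j\<in>set c0list. y' j = 0)"
proof (induction n arbitrary: y rule: less_induct)
  case (less n y)
  show ?case
  proof (cases "n = 0")
    case True
    hence "{j \<in> set c0list. y j \<noteq> 0} = {}" using less.prems(3) by simp
    thus ?thesis using less.prems by blast
  next
    case False
    hence "{j \<in> set c0list. y j \<noteq> 0} \<noteq> {}" using less.prems(3) by (metis card.empty)
    then obtain j where j: "j \<in> set c0list" "y j \<noteq> 0" by auto
    obtain w where w: "w \<in> vecs 32" "\<forall>u\<in>N32. dotp 32 u w = 0" "w j = 1"
      "\<forall>k\<in>set c0list. k \<noteq> j \<longrightarrow> w k = 0" using wcert[OF j(1)] by blast
    have twC: "tw w \<in> C" by (rule tw_in_C[OF sd res w(1,2)])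
    define y' where "y' = (\<lambda>i. y i + tw w i)"
    have y'C: "y' \<in> C" using z4 less.prems(1) twC unfolding z4_code_def y'_def by blast
    have red: "\<forall>i. red2 (y' i) = v32 i" using less.prems(2) unfolding y'_def red2_add_tw by simp
    have "red2 (y j) = 0" using less.prems(2) c0_v32 j(1) by simp
    hence "y j = 2" using j(2) ex4[of "y j"] unfolding red2_def by auto
    hence y'j: "y' j = 0" using w(3) unfolding y'_def tw_def by simp
    have "{k \<in> set c0list. y' k \<noteq> 0} = {k \<in> set c0list. y k \<noteq> 0} - {j}"
    proof -
      have "y' k = y k" if "k \<in> set c0list" "k \<noteq> j" for k
        using w(4) that unfolding y'_def tw_def by simp
      thus ?thesis using y'j by force
    qed
    hence "card {k \<in> set c0list. y' k \<noteq> 0} = n - 1"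
      using less.prems(3) j by simp
    moreover have "n - 1 < n" using False by simp
    ultimately show ?thesis using less.IH y'C red by blast
  qed
qed

lemma n_count_le: "n_count n x a \<le> n"
proof -
  have "n_count n x a \<le> card {1..n}" unfolding n_count_def by (rule card_mono) auto
  thus ?thesis by simp
qed

lemma no_extremal:
  assumes t2: "type_II 32 C" and res: "residue_code C = N32"
  shows "\<not> extremal_type_II 32 C"
proof
  assume ex: "extremal_type_II 32 C"
  have sd: "self_dual_z4 32 C" using t2 unfolding type_II_def by simp
  hence z4: "z4_code 32 C" unfolding self_dual_z4_def by simp
  have resC: "\<forall>x\<in>C. (\<lambda>i. red2 (x i)) \<in> N32" using res unfolding residue_code_def by auto
  have "v32 \<in> N32" unfolding N32_eq Gall_def by (rule bin_gen_mem) simp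
  hence "v32 \<in> residue_code C" using res by simp
  hence "\<exists>x. v32 = (\<lambda>i. red2 (x i)) \<and> x \<in> C" unfolding residue_code_def by (simp only: mem_Collect_eq)
  then obtain x where x0: "v32 = (\<lambda>i. red2 (x i)) \<and> x \<in> C" ..
  have x: "x \<in> C" using x0 by (rule conjunct2)
  have xe: "v32 = (\<lambda>i. red2 (x i))" using x0 by (rule conjunct1)
  have xr: "\<forall>i. red2 (x i) = v32 i" unfolding xe by (rule allI, rule refl)
  obtain y where y: "y \<in> C" "\<forall>i. red2 (y i) = v32 i" "\<forall>j\<in>set c0list. y j = 0"
    using reduce[OF z4 sd resC x xr refl] by blast
  have yv: "y \<in> vecs 32" using z4 y(1) unfolding z4_code_def by auto
  have v1: "v32 1 = 1" by (simp add: v32_def ind32_def)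
  have y1: "y 1 \<noteq> 0"
  proof
    assume "y 1 = 0"
    hence "red2 (y 1) = 0" by (simp add: red2_vals)
    thus False using y(2) v1 by simp
  qed
  hence ynz: "y \<noteq> (\<lambda>i. 0)" by auto
  let ?A1 = "{i \<in> {1..32}. y i = 1}" and ?A3 = "{i \<in> {1..32}. y i = 3}" and ?A2 = "{i \<in> {1..32}. y i = 2}"
  have "?A1 \<union> ?A3 \<subseteq> supp 32 v32"
  proof
    fix i assume "i \<in> ?A1 \<union> ?A3"
    hence "i \<in> {1..32}" "red2 (y i) = 1" by (auto simp: red2_vals)
    moreover have "red2 (y i) = v32 i" using y(2) by blast
    ultimately show "i \<in> supp 32 v32" unfolding supp_def by simp
  qed
  moreover have "finite (supp 32 v32)" unfolding supp_def by simp
  ultimately have "card (?A1 \<union> ?A3) \<le> card (supp 32 v32)" by (rule card_mono[rotated])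
  hence "card (?A1 \<union> ?A3) \<le> 8" using v32_wt unfolding ham_wt_supp by simp
  moreover have "card (?A1 \<union> ?A3) = card ?A1 + card ?A3" by (rule card_Un_disjoint) auto
  ultimately have n13: "n_count 32 y 1 + n_count 32 y 3 \<le> 8" unfolding n_count_def by simp
  have "?A2 \<subseteq> {6}"
  proof
    fix i assume i: "i \<in> ?A2"
    hence yi: "y i = 2" and i32: "i \<in> {1..32}" by auto
    have "i \<in> set [1..<33]" using i32 by (simp only: set_upt) auto
    hence "i \<in> set c0list \<or> i = 6 \<or> v32 i = 1" using c0_cover by blast
    moreover have "v32 i \<noteq> 1" using y(2) yi by (metis red2_vals(3) zero_neq_one)
    moreover have "i \<notin> set c0list" using y(3) yi by force
    ultimately show "i \<in> {6}" by blast
  qed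
  hence "card ?A2 \<le> 1" using card_mono[of "{6}" ?A2] by simp
  hence n2: "n_count 32 y 2 \<le> 1" unfolding n_count_def .
  have ew: "eucl_wt 32 y \<le> 12" unfolding eucl_wt_def using n13 n2 by linarith
  let ?E = "{eucl_wt 32 x |x. x \<in> C \<and> x \<noteq> (\<lambda>i. 0)}"
  have "?E \<subseteq> {..192}"
  proof
    fix e assume "e \<in> ?E"
    then obtain x where "e = eucl_wt 32 x" by auto
    thus "e \<in> {..192}" unfolding eucl_wt_def using n_count_le[of 32 x 1] n_count_le[of 32 x 2] n_count_le[of 32 x 3]
      by simp
  qed
  hence finE: "finite ?E" by (rule finite_subset) simp
  have "eucl_wt 32 y \<in> ?E" using y(1) ynz by auto
  hence "Min ?E \<le> eucl_wt 32 y" using Min_le[OF finE] by blast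
  hence "min_eucl_wt 32 C \<le> 12" unfolding min_eucl_wt_def using ew by linarith
  moreover have "min_eucl_wt 32 C = 16" using ex unfolding extremal_type_II_def by simp
  ultimately show False by simp
qed

theorem mainTheorem9:
  shows "N32 \<subseteq> vecs 32 \<and> card N32 = 2 ^ 7
     \<and> doubly_even 32 N32
     \<and> ind32 (\<lambda>i. True) \<in> N32
     \<and> (\<forall>y \<in> dual_code 32 N32. y \<noteq> (\<lambda>i. 0) \<longrightarrow> ham_wt 32 y \<ge> 4)
     \<and> \<not> (\<exists>C. type_II 32 C \<and> residue_code C = N32 \<and> extremal_type_II 32 C)"
  using N32_vecs card_N32 N32_de ones_N32 dual_wt no_extremal by blast

end
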